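(* Let $n\ge3$ and let $g=(g_{ab})$ be a smooth Riemannian metric (symmetric positive definite matrix function) on an open set $U\subset\mathbb R^n$. Let $L=g^{ab}\partial_{ab}$ and define the linear operator $\tilde\Gamma^k$ on symmetric matrix functions $h$ by $\tilde\Gamma^k(h)=-\frac{n-2}{2}\frac{g^{kr}g^{ka}g^{kb}}{g^{kk}}\partial_rh_{ab}$ (no summation over $k$). Let $Q$ be the principal part (fourth order part) of the linear operator $$h_{ab}\mapsto L^2(h_{ab})-L\big[\partial_a(g_{bl}\tilde\Gamma^l(h))+\partial_b(g_{al}\tilde\Gamma^l(h))\big]+\frac{n-2}{n-1}\partial_{abl}\tilde\Gamma^l(h)+\frac1{n-1}L(\partial_l\tilde\Gamma^l(h))\,g_{ab}$$ acting on symmetric $n\times n$ matrix functions $h$, where $L^2=g^{ab}g^{cd}\partial_{abcd}$. Then $Q$ is elliptic of order $4$, i.e. for every $x\in U$ and $\xi\ne0$ its principal symbol is an invertible linear map on symmetric matrices. *)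

theory Defs
  imports "HOL-Analysis.Analysis"
begin

definition pdiff :: "'n::finite \<Rightarrow> (real^'n \<Rightarrow> real) \<Rightarrow> real^'n \<Rightarrow> real" where
  "pdiff i f x = deriv (\<lambda>t. f (x + t *\<^sub>R axis i 1)) 0"

fun iter_pdiff :: "'n::finite list \<Rightarrow> (real^'n \<Rightarrow> real) \<Rightarrow> real^'n \<Rightarrow> real" where
  "iter_pdiff [] f = f"
| "iter_pdiff (i # is) f = pdiff i (iter_pdiff is f)"

definition smooth_on_set :: "(real^'n::finite) set \<Rightarrow> (real^'n \<Rightarrow> real) \<Rightarrow> bool" where
  "smooth_on_set U f \<longleftrightarrow>
     (\<forall>is. continuous_on U (iter_pdiff is f) \<and>
        (\<forall>i. \<forall>x\<in>U. (\<lambda>t. iter_pdiff is f (x + t *\<^sub>R axis i 1)) differentiable (at 0)))"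

definition riemannian_metric_on :: "(real^'n::finite) set \<Rightarrow> (real^'n \<Rightarrow> real^'n^'n) \<Rightarrow> bool" where
  "riemannian_metric_on U g \<longleftrightarrow>
     (\<forall>a b. smooth_on_set U (\<lambda>x. g x $ a $ b)) \<and>
     (\<forall>x\<in>U. transpose (g x) = g x \<and> (\<forall>v. v \<noteq> 0 \<longrightarrow> v \<bullet> (g x *v v) > 0))"

definition sym_mats :: "(real^'n::finite^'n) set" where
  "sym_mats = {H. transpose H = H}"

section \<open>Principal symbols (each derivative \<partial>_a replaced by \<xi>_a), at a point where g = G\<close>

definition symb_L :: "real^'n::finite^'n \<Rightarrow> real^'n \<Rightarrow> real" where
  "symb_L G \<xi> = (\<Sum>a\<in>UNIV. \<Sum>b\<in>UNIV. matrix_inv G $ a $ b * \<xi> $ a * \<xi> $ b)"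

definition symb_Gt :: "real^'n::finite^'n \<Rightarrow> real^'n \<Rightarrow> real^'n^'n \<Rightarrow> 'n \<Rightarrow> real" where
  "symb_Gt G \<xi> H k =
     - ((real CARD('n) - 2) / 2) *
       (\<Sum>r\<in>UNIV. \<Sum>a\<in>UNIV. \<Sum>b\<in>UNIV.
          matrix_inv G $ k $ r * matrix_inv G $ k $ a * matrix_inv G $ k $ b
            / matrix_inv G $ k $ k * \<xi> $ r * H $ a $ b)"

definition principal_symbol :: "real^'n::finite^'n \<Rightarrow> real^'n \<Rightarrow> real^'n^'n \<Rightarrow> real^'n^'n" where
  "principal_symbol G \<xi> H = (\<chi> a b.
       (symb_L G \<xi>)\<^sup>2 * H $ a $ b
     - symb_L G \<xi> * (\<xi> $ a * (\<Sum>l\<in>UNIV. G $ b $ l * symb_Gt G \<xi> H l)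
                     + \<xi> $ b * (\<Sum>l\<in>UNIV. G $ a $ l * symb_Gt G \<xi> H l))
     + (real CARD('n) - 2) / (real CARD('n) - 1) *
         \<xi> $ a * \<xi> $ b * (\<Sum>l\<in>UNIV. \<xi> $ l * symb_Gt G \<xi> H l)
     + 1 / (real CARD('n) - 1) *
         symb_L G \<xi> * (\<Sum>l\<in>UNIV. \<xi> $ l * symb_Gt G \<xi> H l) * G $ a $ b)"

end

theory Submission
  imports Defs
begin

lemma triple_sum:
  fixes A B C x :: "'n::finite \<Rightarrow> real" and Hh :: "'n \<Rightarrow> 'n \<Rightarrow> real"
  shows "(\<Sum>r\<in>UNIV. \<Sum>a\<in>UNIV. \<Sum>b\<in>UNIV. A r * B a * C b / D * x r * Hh a b)
    = (\<Sum>r\<in>UNIV. A r * x r) * (\<Sum>a\<in>UNIV. \<Sum>b\<in>UNIV. B a * C b * Hh a b) / D"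
proof -
  have "(\<Sum>r\<in>UNIV. A r * x r) * (\<Sum>a\<in>UNIV. \<Sum>b\<in>UNIV. B a * C b * Hh a b) / D
     = (\<Sum>r\<in>UNIV. A r * x r * (\<Sum>a\<in>UNIV. \<Sum>b\<in>UNIV. B a * C b * Hh a b) / D)"
    by (simp add: sum_distrib_right sum_divide_distrib)
  also have "\<dots> = (\<Sum>r\<in>UNIV. \<Sum>a\<in>UNIV. \<Sum>b\<in>UNIV. A r * B a * C b / D * x r * Hh a b)"
    by (intro sum.cong refl) (simp add: sum_distrib_left sum_divide_distrib mult_ac)
  finally show ?thesis by simp
qed

lemma Gt_eq:
  fixes G :: "real^'n::finite^'n"
  shows "symb_Gt G \<xi> H k = - ((real CARD('n) - 2) / 2) *
     ((\<Sum>r\<in>UNIV. matrix_inv G $ k $ r * \<xi> $ r) *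
     (\<Sum>a\<in>UNIV. \<Sum>b\<in>UNIV. matrix_inv G $ k $ a * matrix_inv G $ k $ b * H $ a $ b) / matrix_inv G $ k $ k)"
  unfolding symb_Gt_def
  using triple_sum[of "\<lambda>r. matrix_inv G $ k $ r" "\<lambda>a. matrix_inv G $ k $ a" "\<lambda>a. matrix_inv G $ k $ a" "matrix_inv G $ k $ k" "\<lambda>r. \<xi> $ r" "\<lambda>a b. H $ a $ b"]
  by (simp only:)

lemma Gt_add:
  fixes G :: "real^'n::finite^'n"
  shows "symb_Gt G \<xi> (H + K) k = symb_Gt G \<xi> H k + symb_Gt G \<xi> K k"
  unfolding Gt_eq by (simp add: sum.distrib algebra_simps add_divide_distrib diff_divide_distrib)

lemma Gt_scale:
  fixes G :: "real^'n::finite^'n"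
  shows "symb_Gt G \<xi> (c *\<^sub>R H) k = c * symb_Gt G \<xi> H k"
  unfolding Gt_eq by (simp add: sum_distrib_left algebra_simps)

lemma Gt_transpose:
  fixes G :: "real^'n::finite^'n"
  shows "symb_Gt G \<xi> (transpose H) k = symb_Gt G \<xi> H k"
  unfolding Gt_eq transpose_def
  by (simp add: mult_ac, subst sum.swap, simp add: mult_ac)

lemma lin: fixes G :: "real^'n::finite^'n" shows "linear (principal_symbol G \<xi>)"
proof (rule linearI)
  fix x y :: "real^'n^'n"
  have 1: "\<And>b. (\<Sum>l\<in>UNIV. G$b$l * symb_Gt G \<xi> (x+y) l) = (\<Sum>l\<in>UNIV. G$b$l * symb_Gt G \<xi> x l) + (\<Sum>l\<in>UNIV. G$b$l * symb_Gt G \<xi> y l)"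
    by (simp add: Gt_add distrib_left sum.distrib)
  have 2: "(\<Sum>l\<in>UNIV. \<xi>$l * symb_Gt G \<xi> (x+y) l) = (\<Sum>l\<in>UNIV. \<xi>$l * symb_Gt G \<xi> x l) + (\<Sum>l\<in>UNIV. \<xi>$l * symb_Gt G \<xi> y l)"
    by (simp add: Gt_add distrib_left sum.distrib)
  show "principal_symbol G \<xi> (x + y) = principal_symbol G \<xi> x + principal_symbol G \<xi> y"
    by (simp add: principal_symbol_def vec_eq_iff 1 2 algebra_simps add_divide_distrib diff_divide_distrib)
next
  fix c :: real and x :: "real^'n^'n"
  have 1: "\<And>b. (\<Sum>l\<in>UNIV. G$b$l * symb_Gt G \<xi> (c *\<^sub>R x) l) = c * (\<Sum>l\<in>UNIV. G$b$l * symb_Gt G \<xi> x l)"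
    by (simp add: Gt_scale sum_distrib_left mult_ac)
  have 2: "(\<Sum>l\<in>UNIV. \<xi>$l * symb_Gt G \<xi> (c *\<^sub>R x) l) = c * (\<Sum>l\<in>UNIV. \<xi>$l * symb_Gt G \<xi> x l)"
    by (simp add: Gt_scale sum_distrib_left mult_ac)
  show "principal_symbol G \<xi> (c *\<^sub>R x) = c *\<^sub>R principal_symbol G \<xi> x"
    by (simp add: principal_symbol_def vec_eq_iff 1 2 algebra_simps)
qed

lemma delta_sum [simp]:
  fixes f :: "'n::finite \<Rightarrow> real"
  shows "(\<Sum>l\<in>UNIV. (if k = l then 1 else 0) * f l) = f k"
    and "(\<Sum>l\<in>UNIV. (if l = k then 1 else 0) * f l) = f k"
    and "(\<Sum>l\<in>UNIV. f l * (if l = k then 1 else 0)) = f k"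
    and "(\<Sum>l\<in>UNIV. f l * (if k = l then 1 else 0)) = f k"
  by (subst sum.cong[OF refl, where h = "\<lambda>l. if k = l then f l else 0"], auto)+

lemma P_transpose:
  fixes G :: "real^'n::finite^'n"
  assumes "transpose G = G"
  shows "principal_symbol G \<xi> (transpose H) = transpose (principal_symbol G \<xi> H)"
proof -
  have g: "G$a$b = G$b$a" for a b using assms by (metis transpose_def vec_lambda_beta)
  show ?thesis
    unfolding principal_symbol_def Gt_transpose
    by (simp add: vec_eq_iff transpose_def g algebra_simps)
qed

lemma alg:
  fixes A c e L t q S r g :: real
  assumes "L^2 * g * t = -c*e*(2*L*e*t - q*e^2*S - r*L*S*g)"
  shows "t*(L^2*g + 2*c*L*e^2) = c*S*e*(q*e^2 + L*g*r)"
  using assms by (simp add: algebra_simps power2_eq_square)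

lemma alg2:
  fixes L d p S e g :: real
  assumes "L \<noteq> 0" "d \<noteq> 0"
  shows "(p*S*e/(L*d)) * (L^2*g + (d-1)*L*e^2) = p*S*e*((d-1)/d*e^2 + L*g*(1/d))"
  using assms by (simp add: field_simps power2_eq_square)

lemma key:
  fixes G :: "real^'n::finite^'n" and H :: "real^'n^'n"
  defines "Gi \<equiv> matrix_inv G"
  assumes GiG: "\<And>i j. (\<Sum>k\<in>UNIV. Gi$i$k * G$k$j) = (if i = j then 1 else 0)"
    and Gisym: "\<And>i j. Gi$i$j = Gi$j$i"
    and diag: "\<And>k. Gi$k$k > 0"
    and Lpos: "symb_L G \<xi> > 0"
    and card: "CARD('n) \<ge> 3"
    and P0: "principal_symbol G \<xi> H = 0"
  shows "H = 0"
proof -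
  define m where "m = real CARD('n)"
  define L where "L = symb_L G \<xi>"
  define t where "t = (\<lambda>l. symb_Gt G \<xi> H l)"
  define S where "S = (\<Sum>l\<in>UNIV. \<xi>$l * t l)"
  define V where "V = (\<lambda>b. \<Sum>l\<in>UNIV. G$b$l * t l)"
  define \<eta> where "\<eta> = (\<lambda>k. \<Sum>r\<in>UNIV. Gi$k$r * \<xi>$r)"
  define w where "w = (\<lambda>k. \<Sum>a\<in>UNIV. \<Sum>b\<in>UNIV. Gi$k$a * Gi$k$b * H$a$b)"
  have m3: "m \<ge> 3" using card unfolding m_def by simp
  have Lp: "L > 0" using Lpos L_def by simp
  have teq: "t k = - ((m - 2) / 2) * (\<eta> k * w k / Gi$k$k)" for k
    unfolding t_def m_def \<eta>_def w_def Gi_def by (rule Gt_eq)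
  have star: "L^2 * H$a$b = L * (\<xi>$a * V b + \<xi>$b * V a) - (m-2)/(m-1) * \<xi>$a * \<xi>$b * S
      - 1/(m-1) * L * S * G$a$b" for a b
  proof -
    have "principal_symbol G \<xi> H $ a $ b = 0" using P0 by simp
    then show ?thesis
      unfolding principal_symbol_def L_def[symmetric] m_def[symmetric] V_def S_def t_def
      by simp
  qed
  have A1: "(\<Sum>b\<in>UNIV. Gi$k$b * V b) = t k" for k
  proof -
    have "(\<Sum>b\<in>UNIV. Gi$k$b * V b) = (\<Sum>l\<in>UNIV. (\<Sum>b\<in>UNIV. Gi$k$b * G$b$l) * t l)"
      unfolding V_def sum_distrib_left sum_distrib_right by (subst sum.swap) (simp add: mult_ac)
    also have "\<dots> = t k" by (simp add: GiG)
    finally show ?thesis .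
  qed
  have A4: "(\<Sum>a\<in>UNIV. \<Sum>b\<in>UNIV. Gi$k$a * Gi$k$b * G$a$b) = Gi$k$k" for k
  proof -
    have "(\<Sum>a\<in>UNIV. \<Sum>b\<in>UNIV. Gi$k$a * Gi$k$b * G$a$b)
       = (\<Sum>b\<in>UNIV. (\<Sum>a\<in>UNIV. Gi$k$a * G$a$b) * Gi$k$b)"
      unfolding sum_distrib_left sum_distrib_right by (subst sum.swap) (simp add: mult_ac)
    also have "\<dots> = Gi$k$k" by (simp add: GiG)
    finally show ?thesis .
  qed
  have A2: "(\<Sum>a\<in>UNIV. \<Sum>b\<in>UNIV. Gi$k$a * Gi$k$b * (\<xi>$a * V b)) = \<eta> k * t k" for k
  proof -
    have "(\<Sum>a\<in>UNIV. \<Sum>b\<in>UNIV. Gi$k$a * Gi$k$b * (\<xi>$a * V b))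
       = (\<Sum>a\<in>UNIV. Gi$k$a * \<xi>$a) * (\<Sum>b\<in>UNIV. Gi$k$b * V b)"
      by (simp add: sum_distrib_left sum_distrib_right mult_ac)
    then show ?thesis using A1 by (simp add: \<eta>_def)
  qed
  have A3: "(\<Sum>a\<in>UNIV. \<Sum>b\<in>UNIV. Gi$k$a * Gi$k$b * (\<xi>$b * V a)) = \<eta> k * t k" for k
  proof -
    have "(\<Sum>a\<in>UNIV. \<Sum>b\<in>UNIV. Gi$k$a * Gi$k$b * (\<xi>$b * V a))
       = (\<Sum>a\<in>UNIV. Gi$k$a * V a) * (\<Sum>b\<in>UNIV. Gi$k$b * \<xi>$b)"
      by (simp only: sum_distrib_right) (simp add: sum_distrib_left mult_ac)
    then show ?thesis using A1 by (simp add: \<eta>_def mult.commute)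
  qed
  have A5: "(\<Sum>a\<in>UNIV. \<Sum>b\<in>UNIV. Gi$k$a * Gi$k$b * (\<xi>$a * \<xi>$b)) = \<eta> k ^ 2" for k
    by (simp add: \<eta>_def power2_eq_square sum_distrib_left sum_distrib_right mult_ac)
  have wL: "L^2 * w k = 2 * L * \<eta> k * t k - (m-2)/(m-1) * \<eta> k ^ 2 * S - 1/(m-1) * L * S * Gi$k$k" for k
  proof -
    have "L^2 * w k = (\<Sum>a\<in>UNIV. \<Sum>b\<in>UNIV. Gi$k$a * Gi$k$b * (L^2 * H$a$b))"
      unfolding w_def by (simp add: sum_distrib_left mult_ac)
    also have "\<dots> = (\<Sum>a\<in>UNIV. \<Sum>b\<in>UNIV.
        L * (Gi$k$a * Gi$k$b * (\<xi>$a * V b)) + L * (Gi$k$a * Gi$k$b * (\<xi>$b * V a))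
        - (m-2)/(m-1) * S * (Gi$k$a * Gi$k$b * (\<xi>$a * \<xi>$b))
        - 1/(m-1) * L * S * (Gi$k$a * Gi$k$b * G$a$b))"
      by (intro sum.cong refl) (subst star, simp add: algebra_simps diff_divide_distrib add_divide_distrib)
    also have "\<dots> = L * (\<Sum>a\<in>UNIV. \<Sum>b\<in>UNIV. Gi$k$a * Gi$k$b * (\<xi>$a * V b))
        + L * (\<Sum>a\<in>UNIV. \<Sum>b\<in>UNIV. Gi$k$a * Gi$k$b * (\<xi>$b * V a))
        - (m-2)/(m-1) * S * (\<Sum>a\<in>UNIV. \<Sum>b\<in>UNIV. Gi$k$a * Gi$k$b * (\<xi>$a * \<xi>$b))
        - 1/(m-1) * L * S * (\<Sum>a\<in>UNIV. \<Sum>b\<in>UNIV. Gi$k$a * Gi$k$b * G$a$b)"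
      by (simp add: sum.distrib sum_subtractf sum_distrib_left)
    also have "\<dots> = 2 * L * \<eta> k * t k - (m-2)/(m-1) * \<eta> k ^ 2 * S - 1/(m-1) * L * S * Gi$k$k"
      by (simp add: A2 A3 A4 A5)
    finally show ?thesis .
  qed
  have tk: "t k = (m-2)/2 * S * \<eta> k / (L * (m-1))" for k
  proof -
    have gk: "Gi$k$k > 0" by (rule diag)
    have m1: "m - 1 > 0" using m3 by simp
    have e1: "L^2 * Gi$k$k * t k = - ((m - 2) / 2) * \<eta> k * (L^2 * w k)"
    proof -
      have e0: "Gi$k$k * t k = - ((m - 2) / 2) * \<eta> k * w k"
        using teq[of k] gk by (simp add: field_simps)
      have "L^2 * (Gi$k$k * t k) = L^2 * (- ((m - 2) / 2) * \<eta> k * w k)" using e0 by simp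
      then show ?thesis by (simp add: mult_ac)
    qed
    have F: "L^2 * Gi$k$k + 2 * ((m-2)/2) * L * \<eta> k ^ 2 > 0"
      using gk Lp m3 by (intro add_pos_nonneg) (auto intro!: mult_nonneg_nonneg)
    have "t k * (L^2 * Gi$k$k + 2 * ((m-2)/2) * L * \<eta> k ^ 2)
        = ((m-2)/2 * S * \<eta> k / (L * (m-1))) * (L^2 * Gi$k$k + 2 * ((m-2)/2) * L * \<eta> k ^ 2)"
    proof -
      have e2: "L^2 * Gi$k$k * t k = - ((m - 2) / 2) * \<eta> k * (2 * L * \<eta> k * t k - (m-2)/(m-1) * \<eta> k ^ 2 * S - 1/(m-1) * L * S * Gi$k$k)"
        using e1 wL[of k] by simp
      have e3: "t k * (L^2 * Gi$k$k + 2 * ((m-2)/2) * L * \<eta> k ^ 2) = (m-2)/2 * S * \<eta> k * ((m-2)/(m-1) * \<eta> k ^ 2 + L * Gi$k$k * (1/(m-1)))"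
        using alg[OF e2] .
      have e4: "((m-2)/2 * S * \<eta> k / (L * (m-1))) * (L^2 * Gi$k$k + 2 * ((m-2)/2) * L * \<eta> k ^ 2) = (m-2)/2 * S * \<eta> k * ((m-2)/(m-1) * \<eta> k ^ 2 + L * Gi$k$k * (1/(m-1)))"
      proof -
        have q1: "m - 1 - 1 = m - 2" "2 * ((m-2)/2) = m - 2" by simp_all
        show ?thesis
          using alg2[of L "m-1" "(m-2)/2" S "\<eta> k" "Gi$k$k"] Lp m1 unfolding q1 by simp
      qed
      show ?thesis by (simp only: e3 e4)
    qed
    then show ?thesis using F by (metis mult_right_cancel order_less_irrefl)
  qed
  have sumL: "(\<Sum>k\<in>UNIV. \<xi>$k * \<eta> k) = L"
    unfolding L_def symb_L_def \<eta>_def Gi_def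
    by (simp add: sum_distrib_left mult_ac)
  have "S = (\<Sum>k\<in>UNIV. \<xi>$k * t k)" by (simp add: S_def)
  also have "\<dots> = (\<Sum>k\<in>UNIV. (m-2)/2 * S / (L * (m-1)) * (\<xi>$k * \<eta> k))"
    by (intro sum.cong refl) (simp add: tk)
  also have "\<dots> = (m-2)/2 * S / (L * (m-1)) * (\<Sum>k\<in>UNIV. \<xi>$k * \<eta> k)"
    by (simp add: sum_distrib_left)
  finally have "S = (m-2)/2 * S / (L * (m-1)) * (\<Sum>k\<in>UNIV. \<xi>$k * \<eta> k)" .
  then have "S = (m-2)/2 * S / (m-1)" using sumL Lp by simp
  then have "S * (2 * (m-1)) = (m-2) * S" using m3 by (simp add: field_simps)
  then have "m * S = 0" by (simp add: algebra_simps)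
  then have S0: "S = 0" using m3 by simp
  then have t0: "t k = 0" for k using tk by simp
  then have V0: "V b = 0" for b by (simp add: V_def)
  show "H = 0"
  proof (simp add: vec_eq_iff, intro allI)
    fix a b
    have "L^2 * H$a$b = 0" using star[of a b] S0 V0 by simp
    then show "H$a$b = 0" using Lp by simp
  qed
qed

lemma pd_facts:
  fixes G :: "real^'n::finite^'n"
  assumes sym: "transpose G = G" and pd0: "\<forall>v. v \<noteq> 0 \<longrightarrow> v \<bullet> (G *v v) > 0"
  shows "matrix_inv G ** G = mat 1" "G ** matrix_inv G = mat 1"
    "transpose (matrix_inv G) = matrix_inv G"
    "\<And>v. v \<noteq> 0 \<Longrightarrow> v \<bullet> (matrix_inv G *v v) > 0"
proof -
  have pd: "v \<bullet> (G *v v) > 0" if "v \<noteq> 0" for v using pd0 that by blast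
  have "\<forall>x. G *v x = 0 \<longrightarrow> x = 0"
  proof (intro allI impI, rule ccontr)
    fix x assume "G *v x = 0" "x \<noteq> 0"
    then show False using pd[of x] by simp
  qed
  then obtain B where B: "B ** G = mat 1" using matrix_left_invertible_ker by blast
  then have "G ** B = mat 1" using matrix_left_right_inverse by blast
  then have ex: "\<exists>A'. G ** A' = mat 1 \<and> A' ** G = mat 1" using B by blast
  have both: "G ** matrix_inv G = mat 1 \<and> matrix_inv G ** G = mat 1"
    unfolding matrix_inv_def by (rule someI_ex[OF ex])
  then show i1: "matrix_inv G ** G = mat 1" and i2: "G ** matrix_inv G = mat 1" by auto
  define Gi where "Gi = matrix_inv G"
  have "transpose Gi ** G = mat 1"
    by (metis Gi_def i2 matrix_transpose_mul sym transpose_mat)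
  then have "transpose Gi = Gi"
    by (metis Gi_def i2 matrix_mul_assoc matrix_mul_lid matrix_mul_rid)
  then show "transpose (matrix_inv G) = matrix_inv G" by (simp add: Gi_def)
  fix v :: "real^'n" assume v: "v \<noteq> 0"
  define w where "w = matrix_inv G *v v"
  have Gw: "G *v w = v" unfolding w_def by (simp add: matrix_vector_mul_assoc i2)
  then have "w \<noteq> 0" using v by auto
  then have "w \<bullet> (G *v w) > 0" by (rule pd)
  then show "v \<bullet> (matrix_inv G *v v) > 0"
    using Gw by (simp add: w_def[symmetric] inner_commute)
qed

lemma quad_form:
  fixes A :: "real^'n::finite^'n"
  shows "v \<bullet> (A *v v) = (\<Sum>a\<in>UNIV. \<Sum>b\<in>UNIV. A $ a $ b * v $ a * v $ b)"
  by (simp add: inner_vec_def matrix_vector_mult_def sum_distrib_left mult_ac)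

theorem lemma2p3:
  fixes U :: "(real^'n::finite) set" and g :: "real^'n \<Rightarrow> real^'n^'n"
  assumes "CARD('n) \<ge> 3"
    and "open U"
    and "riemannian_metric_on U g"
  shows "\<forall>x\<in>U. \<forall>\<xi>::real^'n. \<xi> \<noteq> 0 \<longrightarrow>
           bij_betw (principal_symbol (g x) \<xi>) sym_mats sym_mats"
proof (intro ballI allI impI)
  fix x and \<xi> :: "real^'n"
  assume xU: "x \<in> U" and xi: "\<xi> \<noteq> 0"
  define G where "G = g x"
  have sym: "transpose G = G" and pd: "\<forall>v. v \<noteq> 0 \<longrightarrow> v \<bullet> (G *v v) > 0"
    using assms(3) xU unfolding riemannian_metric_on_def G_def by auto
  note F = pd_facts[OF sym pd]
  define Gi where "Gi = matrix_inv G"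
  have GiG: "(\<Sum>k\<in>UNIV. Gi$i$k * G$k$j) = (if i = j then 1 else 0)" for i j
  proof -
    have "(Gi ** G) $ i $ j = mat 1 $ i $ j" using F(1) Gi_def by simp
    then show ?thesis by (simp add: matrix_matrix_mult_def mat_def)
  qed
  have Gisym: "Gi$i$j = Gi$j$i" for i j
    using F(3) unfolding Gi_def[symmetric] by (metis transpose_def vec_lambda_beta)
  have diag: "Gi$k$k > 0" for k
  proof -
    have "axis k (1::real) \<bullet> (Gi *v axis k 1) > 0" using F(4)[of "axis k 1"] Gi_def
      by (simp add: axis_eq_0_iff)
    moreover have "axis k (1::real) \<bullet> (Gi *v axis k 1) = Gi$k$k"
    proof -
      have "(Gi *v axis k 1) $ k = Gi$k$k" by (simp add: matrix_vector_mult_def axis_def)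
      then show ?thesis by (simp add: inner_axis')
    qed
    ultimately show ?thesis by simp
  qed
  have Lpos: "symb_L G \<xi> > 0"
    using F(4)[OF xi] unfolding symb_L_def quad_form .
  have lin: "linear (principal_symbol G \<xi>)" by (rule lin)
  have inj: "inj (principal_symbol G \<xi>)"
    unfolding linear_injective_0[OF lin]
    using key[OF GiG[unfolded Gi_def] Gisym[unfolded Gi_def] diag[unfolded Gi_def] Lpos assms(1)] by blast
  have surj: "surj (principal_symbol G \<xi>)"
    by (rule eucl.linear_injective_imp_surjective[OF lin inj refl])
  have tr: "principal_symbol G \<xi> (transpose H) = transpose (principal_symbol G \<xi> H)" for H
    by (rule P_transpose[OF sym])
  show "bij_betw (principal_symbol (g x) \<xi>) sym_mats sym_mats"
    unfolding G_def[symmetric] bij_betw_def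
  proof (intro conjI)
    show "inj_on (principal_symbol G \<xi>) sym_mats" using inj by (simp add: inj_on_def inj_def)
    show "principal_symbol G \<xi> ` sym_mats = sym_mats"
    proof
      show "principal_symbol G \<xi> ` sym_mats \<subseteq> sym_mats"
        using tr by (auto simp: sym_mats_def) (metis tr)
      show "sym_mats \<subseteq> principal_symbol G \<xi> ` sym_mats"
      proof
        fix K :: "real^'n^'n" assume K: "K \<in> sym_mats"
        obtain H where H: "principal_symbol G \<xi> H = K" using surj by (metis surjD)
        have "principal_symbol G \<xi> (transpose H) = principal_symbol G \<xi> H"
          using tr H K by (simp add: sym_mats_def)
        then have "transpose H = H" using inj by (simp add: inj_eq)
        then show "K \<in> principal_symbol G \<xi> ` sym_mats" using H by (auto simp: sym_mats_def)
      qed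
    qed
  qed
qed

end
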